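(* Let $\mathcal{H}$ be a Hilbert space of dimension $d$ with $2\le d<\infty$, let $X$ be a set with $d^2$ elements, and let $\mathbf{U}=\{U_x:x\in X\}$ and $\mathbf{U}'=\{U'_x:x\in X\}$ be unitary bases for $\mathcal{H}$. Then the following are equivalent: (i) $\mathbf{U}$ is phase-equivalent to $\mathbf{U}'$; (ii) for some $\mathbf{U}$-associated tag $(x_0,U_{x_0},\mathbf{W})$ and some $\mathbf{U}'$-associated tag $(x_0',U'_{x_0'},\mathbf{W}')$, $\mathbf{W}$ is phase-collectively-unitarily equivalent to $\mathbf{W}'$; (iii) for each $\mathbf{U}$-associated tag $(x_0,U_{x_0},\mathbf{W})$ there is a $\mathbf{U}'$-associated tag $(x_0',U'_{x_0'},\mathbf{W}')$ such that $\mathbf{W}$ is phase-collectively-unitarily equivalent to $\mathbf{W}'$; (iv) $\mathbf{U}$ and $\mathbf{U}'$ have the same fan systems to within phase-collective-unitary equivalence.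
   Context: $S^1$ is the unit circle in $\mathbb{C}$. A unitary basis is a family $\mathbf{U}=\{U_x:x\in X\}$ of unitaries on $\mathcal{H}$ with $\operatorname{tr}(U_x^*U_y)=d\,\delta_{xy}$. Unitary bases $\mathbf{U},\mathbf{U}'$ are equivalent if there are unitaries $V_1,V_2$ and a bijection $x\mapsto x'$ of $X$ with $U'_{x'}=V_1U_xV_2$ for all $x$; they are phase-equivalent if there is a function $f:X\to S^1$ such that $\{f(x)U'_x:x\in X\}$ is equivalent to $\{U_x:x\in X\}$. For $x_0\in X$, the $\mathbf{U}$-associated tag at $x_0$ is $(x_0,U_{x_0},\mathbf{W})$ with $\mathbf{W}=\{U_{x_0}^*U_x: x\in X, x\ne x_0\}$; this $\mathbf{W}$ is a unitary system, i.e. a set of unitaries $W_y$ with $\operatorname{tr}W_y=0$ and $\operatorname{tr}(W_x^*W_y)=d\delta_{xy}$. For sets $\mathcal{F},\mathcal{G}$ of operators: $\mathcal{F}$ is collectively unitarily equivalent (CUE) to $\mathcal{G}$ (via $V$) if there is a unitary $V$ with $\mathcal{G}=\{V^*AV:A\in\mathcal{F}\}$; $\mathcal{F}$ is phase-collectively-unitarily equivalent (PCUE) to $\mathcal{G}$ if there is a function $f:\mathcal{F}\to S^1$ with $\{f(A)A:A\in\mathcal{F}\}$ CUE $\mathcal{G}$. A $\mathbf{W}$-MASS is a subset of $\mathbf{W}$ consisting of pairwise commuting elements and maximal with this property; the fan representation $\mathcal{V}_{\mathbf{W}}$ of $\mathbf{W}$ is the family of all $\mathbf{W}$-MASS's (whose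 union is $\mathbf{W}$). The fan system of $\mathbf{U}$ is $\{\mathcal{V}_{\mathbf{W}} : (x_0,U_{x_0},\mathbf{W})$ is the $\mathbf{U}$-associated tag at $x_0$, $x_0\in X\}$. Two fans $\{\mathbf{V}_\alpha:\alpha\in\Lambda\}$ (of $\mathbf{W}$) and $\{\mathbf{V}'_\beta:\beta\in\Lambda'\}$ (of $\mathbf{W}'$) are PCUE if there exist a unitary $V$, a function $h:\mathbf{W}\to S^1$ and a bijection $\alpha\mapsto\alpha'$ of $\Lambda$ onto $\Lambda'$ with $\{h(A)A: A\in\mathbf{V}_\alpha\}$ CUE $\mathbf{V}'_{\alpha'}$ via $V$ for every $\alpha$; two fan systems are the same to within PCUE if every fan in either is PCUE to some fan in the other. *)

theory Defs
  imports "HOL-Analysis.Analysis"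
begin

text \<open>Operators on a d-dimensional Hilbert space are complex d x d matrices,
  with d = CARD('n).\<close>

type_synonym 'n cmat = "complex ^ 'n ^ 'n"

definition adj :: "'n::finite cmat \<Rightarrow> 'n cmat" where
  "adj A = transpose (map_matrix cnj A)"

definition cscale :: "complex \<Rightarrow> 'n::finite cmat \<Rightarrow> 'n cmat" where
  "cscale c A = (\<chi> i j. c * A $ i $ j)"

definition unitary_mat :: "'n::finite cmat \<Rightarrow> bool" where
  "unitary_mat U \<longleftrightarrow> adj U ** U = mat 1 \<and> U ** adj U = mat 1"

definition unitary_basis :: "'x set \<Rightarrow> ('x \<Rightarrow> 'n::finite cmat) \<Rightarrow> bool" where
  "unitary_basis X U \<longleftrightarrow>
     (\<forall>x\<in>X. unitary_mat (U x)) \<and>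
     (\<forall>x\<in>X. \<forall>y\<in>X. trace (adj (U x) ** U y) = (if x = y then of_nat CARD('n) else 0))"

definition ub_equivalent :: "'x set \<Rightarrow> ('x \<Rightarrow> 'n::finite cmat) \<Rightarrow> ('x \<Rightarrow> 'n cmat) \<Rightarrow> bool" where
  "ub_equivalent X U U' \<longleftrightarrow>
     (\<exists>V1 V2 \<sigma>. unitary_mat V1 \<and> unitary_mat V2 \<and> bij_betw \<sigma> X X \<and>
        (\<forall>x\<in>X. U' (\<sigma> x) = V1 ** U x ** V2))"

definition phase_equivalent :: "'x set \<Rightarrow> ('x \<Rightarrow> 'n::finite cmat) \<Rightarrow> ('x \<Rightarrow> 'n cmat) \<Rightarrow> bool" where
  "phase_equivalent X U U' \<longleftrightarrow>
     (\<exists>f. (\<forall>x\<in>X. cmod (f x) = 1) \<and> ub_equivalent X (\<lambda>x. cscale (f x) (U' x)) U)"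

text \<open>The unitary system W of the U-associated tag at x0.\<close>
definition tag_system :: "'x set \<Rightarrow> ('x \<Rightarrow> 'n::finite cmat) \<Rightarrow> 'x \<Rightarrow> 'n cmat set" where
  "tag_system X U x0 = {adj (U x0) ** U x | x. x \<in> X \<and> x \<noteq> x0}"

definition CUE_via :: "'n::finite cmat \<Rightarrow> 'n cmat set \<Rightarrow> 'n cmat set \<Rightarrow> bool" where
  "CUE_via V F G \<longleftrightarrow> unitary_mat V \<and> G = (\<lambda>A. adj V ** A ** V) ` F"

definition CUE :: "'n::finite cmat set \<Rightarrow> 'n cmat set \<Rightarrow> bool" where
  "CUE F G \<longleftrightarrow> (\<exists>V. CUE_via V F G)"

definition PCUE :: "'n::finite cmat set \<Rightarrow> 'n cmat set \<Rightarrow> bool" where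
  "PCUE F G \<longleftrightarrow> (\<exists>f. (\<forall>A\<in>F. cmod (f A) = 1) \<and> CUE ((\<lambda>A. cscale (f A) A) ` F) G)"

definition is_MASS :: "'n::finite cmat set \<Rightarrow> 'n cmat set \<Rightarrow> bool" where
  "is_MASS W S \<longleftrightarrow> S \<subseteq> W \<and> (\<forall>A\<in>S. \<forall>B\<in>S. A ** B = B ** A) \<and>
     (\<forall>T. S \<subseteq> T \<and> T \<subseteq> W \<and> (\<forall>A\<in>T. \<forall>B\<in>T. A ** B = B ** A) \<longrightarrow> T = S)"

definition fan :: "'n::finite cmat set \<Rightarrow> 'n cmat set set" where
  "fan W = {S. is_MASS W S}"

text \<open>PCUE of fans, a fan being the family of all MASSes of its unitary system
  (whose union is that system).\<close>
definition fan_PCUE :: "'n::finite cmat set set \<Rightarrow> 'n cmat set set \<Rightarrow> bool" where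
  "fan_PCUE F F' \<longleftrightarrow>
     (\<exists>V h \<beta>. (\<forall>A\<in>\<Union>F. cmod (h A) = 1) \<and> bij_betw \<beta> F F' \<and>
        (\<forall>S\<in>F. CUE_via V ((\<lambda>A. cscale (h A) A) ` S) (\<beta> S)))"

definition fan_system :: "'x set \<Rightarrow> ('x \<Rightarrow> 'n::finite cmat) \<Rightarrow> 'n cmat set set set" where
  "fan_system X U = (\<lambda>x0. fan (tag_system X U x0)) ` X"

definition same_fan_systems_PCUE :: "'n::finite cmat set set set \<Rightarrow> 'n cmat set set set \<Rightarrow> bool" where
  "same_fan_systems_PCUE FS FS' \<longleftrightarrow>
     (\<forall>F\<in>FS. \<exists>F'\<in>FS'. fan_PCUE F F') \<and> (\<forall>F'\<in>FS'. \<exists>F\<in>FS. fan_PCUE F' F)"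

end

theory Submission
  imports Defs
begin

lemma adj_nth[simp]: "adj A $ i $ j = cnj (A $ j $ i)"
  by (simp add: adj_def transpose_def)

lemma cscale_nth[simp]: "cscale c A $ i $ j = c * A $ i $ j"
  by (simp add: cscale_def)

lemma adj_mult: "adj (A ** B) = adj B ** (adj A :: 'n::finite cmat)"
  by (simp add: vec_eq_iff matrix_matrix_mult_def mult.commute)

lemma adj_adj[simp]: "adj (adj A) = A"
  by (simp add: vec_eq_iff)

lemma adj_mat1[simp]: "adj (mat 1 :: 'n::finite cmat) = mat 1"
  by (simp add: vec_eq_iff mat_def)

lemma adj_cscale: "adj (cscale c A) = cscale (cnj c) (adj A)"
  by (simp add: vec_eq_iff)

lemma cscale_mult_left: "cscale c A ** B = cscale c (A ** (B::'n::finite cmat))"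
  by (simp add: vec_eq_iff matrix_matrix_mult_def sum_distrib_left mult.assoc)

lemma cscale_mult_right: "A ** cscale c B = cscale c (A ** (B::'n::finite cmat))"
  by (simp add: vec_eq_iff matrix_matrix_mult_def sum_distrib_left algebra_simps)

lemma cscale_cscale: "cscale c (cscale c' A) = cscale (c * c') A"
  by (simp add: vec_eq_iff mult.assoc)

lemma cscale_1[simp]: "cscale 1 A = A"
  by (simp add: vec_eq_iff)

lemma trace_cscale: "trace (cscale c (A::'n::finite cmat)) = c * trace A"
  by (simp add: trace_def sum_distrib_left)

lemma cscale_cancel:
  assumes "c \<noteq> 0" "cscale c A = cscale c B" shows "A = B"
  using assms by (simp add: vec_eq_iff)

lemma unitary_adj: "unitary_mat V \<Longrightarrow> unitary_mat (adj V)"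
  by (simp add: unitary_mat_def)

lemma unitary_mult: "unitary_mat P \<Longrightarrow> unitary_mat Q \<Longrightarrow> unitary_mat (P ** Q)"
  unfolding unitary_mat_def adj_mult
  by (metis matrix_mul_assoc matrix_mul_lid)

lemma conj_cancel:
  assumes "unitary_mat V" "adj V ** A ** V = adj V ** B ** V" shows "A = B"
proof -
  have "V ** (adj V ** A ** V) ** adj V = V ** (adj V ** B ** V) ** adj V" using assms by simp
  thus ?thesis using assms unfolding unitary_mat_def
    by (simp add: matrix_mul_assoc) (metis matrix_mul_assoc matrix_mul_lid matrix_mul_rid)
qed

lemma cnj_mult_unit: "cmod c = 1 \<Longrightarrow> cnj c * c = 1"
  by (metis complex_norm_square mult.commute of_real_1 power_one)

lemma unit_simps:
  assumes "unitary_mat V"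
  shows "adj V ** V = mat 1" "V ** adj V = mat 1"
    "A ** adj V ** V = A" "A ** V ** adj V = A"
  using assms unfolding unitary_mat_def
  by (metis matrix_mul_assoc matrix_mul_rid)+

lemma tag_trace:
  assumes "unitary_mat (W :: 'n::finite cmat)"
  shows "adj (adj W ** A) ** (adj W ** B) = adj A ** B"
  by (simp add: adj_mult matrix_mul_assoc unit_simps[OF assms])

lemma sandwich:
  assumes "unitary_mat (P :: 'n::finite cmat)"
  shows "adj (P ** cscale a A ** Q) ** (P ** cscale b B ** Q) = adj Q ** cscale (cnj a * b) (adj A ** B) ** Q"
  by (simp add: adj_mult adj_cscale matrix_mul_assoc cscale_mult_left cscale_mult_right cscale_cscale unit_simps[OF assms] mult.commute)

lemma tag_phase_sep:
  fixes U :: "'x \<Rightarrow> 'n::finite cmat"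
  assumes ub: "unitary_basis X U" and X: "x0 \<in> X" "x \<in> X" "y \<in> X"
    and ab: "a \<noteq> 0" "b \<noteq> 0"
    and eq: "cscale a (adj (U x0) ** U x) = cscale b (adj (U x0) ** U y)"
  shows "x = y"
proof (rule ccontr)
  assume ne: "x \<noteq> y"
  have u0: "unitary_mat (U x0)" using ub X unfolding unitary_basis_def by auto
  have tx: "adj (U x0) ** U x = cscale (b / a) (adj (U x0) ** U y)"
  proof -
    have "cscale (inverse a) (cscale a (adj (U x0) ** U x)) = cscale (inverse a) (cscale b (adj (U x0) ** U y))"
      using eq by simp
    thus ?thesis using ab by (simp add: cscale_cscale divide_inverse mult.commute)
  qed
  have "trace (adj (adj (U x0) ** U y) ** (adj (U x0) ** U x)) = trace (adj (U y) ** U x)"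
    by (simp only: tag_trace[OF u0])
  also have "\<dots> = 0" using ub X ne unfolding unitary_basis_def by auto
  finally have z: "trace (adj (adj (U x0) ** U y) ** (adj (U x0) ** U x)) = 0" .
  have "trace (adj (adj (U x0) ** U y) ** (adj (U x0) ** U x))
      = (b / a) * trace (adj (U y) ** U y)"
    unfolding tx cscale_mult_right trace_cscale by (simp only: tag_trace[OF u0])
  also have "\<dots> = (b / a) * of_nat CARD('n)" using ub X unfolding unitary_basis_def by auto
  finally show False using z ab by simp
qed

lemma tag_inj:
  fixes U :: "'x \<Rightarrow> 'n::finite cmat"
  assumes ub: "unitary_basis X U" and X: "x0 \<in> X"
  shows "inj_on (\<lambda>x. adj (U x0) ** U x) X"
  using tag_phase_sep[OF ub X, of _ _ 1 1] by (auto simp: inj_on_def)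

lemma tag_eq_image: "tag_system X U x0 = (\<lambda>x. adj (U x0) ** U x) ` (X - {x0})"
  unfolding tag_system_def by auto

lemma PCUE_param:
  assumes inj: "inj_on a I" and c: "\<forall>i\<in>I. cmod (c i) = 1" and V: "unitary_mat V"
    and b: "\<forall>i\<in>I. b i = adj V ** cscale (c i) (a i) ** V"
  shows "PCUE (a ` I) (b ` I)"
  unfolding PCUE_def CUE_def CUE_via_def
proof (intro exI conjI)
  let ?f = "\<lambda>A. c (inv_into I a A)"
  show "\<forall>A\<in>a ` I. cmod (?f A) = 1" using c inj by auto
  show "unitary_mat V" by fact
  show "b ` I = (\<lambda>A. adj V ** A ** V) ` (\<lambda>A. cscale (?f A) A) ` a ` I"
    unfolding image_image using inj b by (auto intro!: image_cong)
qed

lemma tag_PCUE_transfer: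
  fixes U U' :: "'x \<Rightarrow> 'n::finite cmat"
  assumes ub: "unitary_basis X U" and bij: "bij_betw \<tau> X X"
    and P: "unitary_mat P" and Q: "unitary_mat Q" and g: "\<forall>x\<in>X. cmod (g x) = 1"
    and eq: "\<forall>x\<in>X. U' (\<tau> x) = P ** cscale (g x) (U x) ** Q" and x0: "x0 \<in> X"
  shows "PCUE (tag_system X U x0) (tag_system X U' (\<tau> x0))"
proof -
  have t2: "tag_system X U' (\<tau> x0) = (\<lambda>x. adj (U' (\<tau> x0)) ** U' (\<tau> x)) ` (X - {x0})"
  proof -
    have "tag_system X U' (\<tau> x0) = (\<lambda>y. adj (U' (\<tau> x0)) ** U' y) ` (X - {\<tau> x0})"
      by (rule tag_eq_image)
    also have "X - {\<tau> x0} = \<tau> ` (X - {x0})"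
      using inj_on_image_set_diff[of \<tau> X X "{x0}"] bij x0 by (simp add: bij_betw_def)
    finally show ?thesis by (simp add: image_image)
  qed
  show ?thesis unfolding tag_eq_image[of X U] t2
  proof (rule PCUE_param[where c = "\<lambda>x. cnj (g x0) * g x" and V = Q])
    show "inj_on (\<lambda>x. adj (U x0) ** U x) (X - {x0})"
      using tag_inj[OF ub x0] by (rule inj_on_subset) auto
    show "\<forall>i\<in>X - {x0}. cmod (cnj (g x0) * g i) = 1" using g x0 by (simp add: norm_mult)
    show "unitary_mat Q" by fact
    show "\<forall>i\<in>X - {x0}. adj (U' (\<tau> x0)) ** U' (\<tau> i) =
        adj Q ** cscale (cnj (g x0) * g i) (adj (U x0) ** U i) ** Q"
      using eq x0 by (simp add: sandwich[OF P])
  qed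
qed

lemma PCUE_tag_imp_phase:
  fixes U U' :: "'x \<Rightarrow> 'n::finite cmat"
  assumes ub: "unitary_basis X U" and ub': "unitary_basis X U'" and fin: "finite X"
    and x0: "x0 \<in> X" and x0': "x0' \<in> X"
    and pc: "PCUE (tag_system X U x0) (tag_system X U' x0')"
  shows "phase_equivalent X U U'"
proof -
  from pc obtain f V where f1: "\<forall>A\<in>tag_system X U x0. cmod (f A) = 1" and V: "unitary_mat V"
    and eq: "tag_system X U' x0' = (\<lambda>A. adj V ** A ** V) ` (\<lambda>A. cscale (f A) A) ` tag_system X U x0"
    unfolding PCUE_def CUE_def CUE_via_def by blast
  define T where "T x = adj (U x0) ** U x" for x
  define T' where "T' y = adj (U' x0') ** U' y" for y
  define c where "c x = f (T x)" for x
  have c1: "cmod (c x) = 1" if "x \<in> X - {x0}" for x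
    using f1 that unfolding c_def T_def tag_system_def by blast
  have ex: "\<exists>y. y \<in> X - {x0'} \<and> T' y = adj V ** cscale (c x) (T x) ** V" if "x \<in> X - {x0}" for x
  proof -
    have "T x \<in> tag_system X U x0" using that unfolding T_def tag_system_def by blast
    hence "cscale (c x) (T x) \<in> (\<lambda>A. cscale (f A) A) ` tag_system X U x0"
      unfolding c_def by (rule imageI)
    hence "adj V ** cscale (c x) (T x) ** V \<in> tag_system X U' x0'"
      unfolding eq by (rule imageI)
    then obtain y where "y \<in> X" "y \<noteq> x0'" "adj V ** cscale (c x) (T x) ** V = adj (U' x0') ** U' y"
      unfolding tag_system_def by blast
    thus ?thesis unfolding T'_def by auto
  qed
  define \<tau> where "\<tau> x = (if x = x0 then x0' else SOME y. y \<in> X - {x0'} \<and> T' y = adj V ** cscale (c x) (T x) ** V)" for x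
  have \<tau>1: "\<tau> x \<in> X - {x0'} \<and> T' (\<tau> x) = adj V ** cscale (c x) (T x) ** V" if "x \<in> X - {x0}" for x
    using someI_ex[OF ex[OF that]] that unfolding \<tau>_def by auto
  have \<tau>0: "\<tau> x0 = x0'" unfolding \<tau>_def by simp
  have inj: "inj_on \<tau> X"
  proof (rule inj_onI)
    fix x1 x2 assume a: "x1 \<in> X" "x2 \<in> X" "\<tau> x1 = \<tau> x2"
    show "x1 = x2"
    proof (cases "x1 = x0 \<or> x2 = x0")
      case True
      have h: "\<And>x. x \<in> X \<Longrightarrow> x \<noteq> x0 \<Longrightarrow> \<tau> x \<noteq> x0'" using \<tau>1 by blast
      show ?thesis using True a h \<tau>0 by metis
    next
      case False
      hence "adj V ** cscale (c x1) (T x1) ** V = adj V ** cscale (c x2) (T x2) ** V"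
        using a \<tau>1 by (metis DiffI singletonD)
      hence "cscale (c x1) (T x1) = cscale (c x2) (T x2)" by (rule conj_cancel[OF V])
      moreover have "c x1 \<noteq> 0" "c x2 \<noteq> 0" using c1 a False by fastforce+
      ultimately show ?thesis using tag_phase_sep[OF ub x0 a(1) a(2)] unfolding T_def by blast
    qed
  qed
  have sub: "\<tau> ` X \<subseteq> X" using \<tau>1 \<tau>0 x0' by auto
  have bij: "bij_betw \<tau> X X" using endo_inj_surj[OF fin sub inj] inj by (simp add: bij_betw_def)
  define \<sigma> where "\<sigma> = inv_into X \<tau>"
  have bs: "bij_betw \<sigma> X X" unfolding \<sigma>_def by (rule bij_betw_inv_into[OF bij])
  define g where "g y = (if y = x0' then 1 else cnj (c (\<sigma> y)))" for y
  define V1 where "V1 = U x0 ** V ** adj (U' x0')"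
  define V2 where "V2 = adj V"
  have u0: "unitary_mat (U x0)" using ub x0 unfolding unitary_basis_def by auto
  have u0': "unitary_mat (U' x0')" using ub' x0' unfolding unitary_basis_def by auto
  have key: "U x = V1 ** cscale (g (\<tau> x)) (U' (\<tau> x)) ** V2" if x: "x \<in> X" for x
  proof (cases "x = x0")
    case True
    thus ?thesis unfolding V1_def V2_def g_def using \<tau>0
      by (simp add: matrix_mul_assoc unit_simps[OF u0'] unit_simps[OF V])
  next
    case False
    hence xx: "x \<in> X - {x0}" using x by simp
    have st: "\<sigma> (\<tau> x) = x" unfolding \<sigma>_def using inv_into_f_f[OF inj x] .
    have gx: "g (\<tau> x) = cnj (c x)" using \<tau>1[OF xx] st unfolding g_def by auto
    have "U' (\<tau> x) = U' x0' ** T' (\<tau> x)"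
      unfolding T'_def by (simp add: matrix_mul_assoc unit_simps[OF u0'])
    also have "\<dots> = U' x0' ** (adj V ** cscale (c x) (T x) ** V)" using \<tau>1[OF xx] by simp
    finally have e: "U' (\<tau> x) = U' x0' ** (adj V ** cscale (c x) (T x) ** V)" .
    have cc: "cnj (c x) * c x = 1" using c1[OF xx] by (rule cnj_mult_unit)
    show ?thesis unfolding gx e V1_def V2_def T_def
      by (simp add: matrix_mul_assoc cscale_mult_left cscale_mult_right cscale_cscale cc
          unit_simps[OF u0'] unit_simps[OF V] unit_simps[OF u0])
  qed
  have g1: "cmod (g y) = 1" if y: "y \<in> X" for y
  proof (cases "y = x0'")
    case False
    have sy: "\<sigma> y \<in> X" using bs y by (meson bij_betwE)
    have ty: "\<tau> (\<sigma> y) = y" unfolding \<sigma>_def using f_inv_into_f[of y \<tau> X] bij y by (simp add: bij_betw_def)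
    have "\<sigma> y \<noteq> x0" using ty \<tau>0 False by auto
    thus ?thesis using c1 sy False unfolding g_def by simp
  qed (simp add: g_def)
  show ?thesis unfolding phase_equivalent_def ub_equivalent_def
  proof (intro exI conjI)
    show "\<forall>x\<in>X. cmod (g x) = 1" using g1 by blast
    show "unitary_mat V1" unfolding V1_def using u0 V u0' by (intro unitary_mult unitary_adj)
    show "unitary_mat V2" unfolding V2_def using V by (rule unitary_adj)
    show "bij_betw \<sigma> X X" by fact
    show "\<forall>y\<in>X. U (\<sigma> y) = V1 ** cscale (g y) (U' y) ** V2"
    proof
      fix y assume y: "y \<in> X"
      have sy: "\<sigma> y \<in> X" using bs y by (meson bij_betwE)
      have ty: "\<tau> (\<sigma> y) = y" unfolding \<sigma>_def using f_inv_into_f[of y \<tau> X] bij y by (simp add: bij_betw_def)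
      show "U (\<sigma> y) = V1 ** cscale (g y) (U' y) ** V2" using key[OF sy] ty by simp
    qed
  qed
qed

lemma MASS_transfer:
  fixes \<phi> :: "'n::finite cmat \<Rightarrow> 'n cmat"
  assumes inj: "inj_on \<phi> W" and W': "W' = \<phi> ` W"
    and comm: "\<forall>A\<in>W. \<forall>B\<in>W. (\<phi> A ** \<phi> B = \<phi> B ** \<phi> A) \<longleftrightarrow> (A ** B = B ** A)"
  shows "bij_betw (\<lambda>S. \<phi> ` S) (fan W) (fan W')"
proof -
  have a: "is_MASS W' (\<phi> ` S)" if m: "is_MASS W S" for S
  proof -
    from m have SW: "S \<subseteq> W" and cS: "\<forall>A\<in>S. \<forall>B\<in>S. A ** B = B ** A"
      and mx: "\<And>T. S \<subseteq> T \<Longrightarrow> T \<subseteq> W \<Longrightarrow> (\<forall>A\<in>T. \<forall>B\<in>T. A ** B = B ** A) \<Longrightarrow> T = S"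
      unfolding is_MASS_def by blast+
    show ?thesis unfolding is_MASS_def
    proof (intro conjI allI impI)
      show "\<phi> ` S \<subseteq> W'" using SW W' by blast
      show "\<forall>A\<in>\<phi> ` S. \<forall>B\<in>\<phi> ` S. A ** B = B ** A" using cS comm SW by blast
      fix T assume T: "\<phi> ` S \<subseteq> T \<and> T \<subseteq> W' \<and> (\<forall>A\<in>T. \<forall>B\<in>T. A ** B = B ** A)"
      define T0 where "T0 = W \<inter> \<phi> -` T"
      have "T0 = S"
      proof (rule mx)
        show "S \<subseteq> T0" using T SW unfolding T0_def by blast
        show "T0 \<subseteq> W" unfolding T0_def by blast
        show "\<forall>A\<in>T0. \<forall>B\<in>T0. A ** B = B ** A" using T comm unfolding T0_def by blast
      qed
      moreover have "T = \<phi> ` T0" using T W' unfolding T0_def by blast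
      ultimately show "T = \<phi> ` S" by simp
    qed
  qed
  have c: "is_MASS W (W \<inter> \<phi> -` S') \<and> \<phi> ` (W \<inter> \<phi> -` S') = S'" if m: "is_MASS W' S'" for S'
  proof -
    from m have SW: "S' \<subseteq> W'" and cS: "\<forall>A\<in>S'. \<forall>B\<in>S'. A ** B = B ** A"
      and mx: "\<And>T. S' \<subseteq> T \<Longrightarrow> T \<subseteq> W' \<Longrightarrow> (\<forall>A\<in>T. \<forall>B\<in>T. A ** B = B ** A) \<Longrightarrow> T = S'"
      unfolding is_MASS_def by blast+
    have im: "\<phi> ` (W \<inter> \<phi> -` S') = S'" using SW W' by blast
    have "is_MASS W (W \<inter> \<phi> -` S')" unfolding is_MASS_def
    proof (intro conjI allI impI)
      show "W \<inter> \<phi> -` S' \<subseteq> W" by blast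
      show "\<forall>A\<in>W \<inter> \<phi> -` S'. \<forall>B\<in>W \<inter> \<phi> -` S'. A ** B = B ** A" using cS comm by blast
      fix T assume T: "W \<inter> \<phi> -` S' \<subseteq> T \<and> T \<subseteq> W \<and> (\<forall>A\<in>T. \<forall>B\<in>T. A ** B = B ** A)"
      have "\<phi> ` T = S'"
      proof (rule mx)
        show "S' \<subseteq> \<phi> ` T" using T im by blast
        show "\<phi> ` T \<subseteq> W'" using T W' by blast
        show "\<forall>A\<in>\<phi> ` T. \<forall>B\<in>\<phi> ` T. A ** B = B ** A" using T comm by blast
      qed
      thus "T = W \<inter> \<phi> -` S'" using T by blast
    qed
    with im show ?thesis by blast
  qed
  show ?thesis unfolding bij_betw_def fan_def
  proof (intro conjI)
    show "inj_on ((`) \<phi>) {S. is_MASS W S}"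
    proof (rule inj_onI)
      fix S1 S2 assume "S1 \<in> {S. is_MASS W S}" "S2 \<in> {S. is_MASS W S}" "\<phi> ` S1 = \<phi> ` S2"
      thus "S1 = S2" using inj_on_image_eq_iff[OF inj, of S1 S2] unfolding is_MASS_def by blast
    qed
    show "(`) \<phi> ` {S. is_MASS W S} = {S. is_MASS W' S}"
    proof
      show "(`) \<phi> ` {S. is_MASS W S} \<subseteq> {S. is_MASS W' S}" using a by blast
      show "{S. is_MASS W' S} \<subseteq> (`) \<phi> ` {S. is_MASS W S}"
      proof
        fix S' assume "S' \<in> {S. is_MASS W' S}"
        hence "is_MASS W (W \<inter> \<phi> -` S') \<and> \<phi> ` (W \<inter> \<phi> -` S') = S'" using c by blast
        thus "S' \<in> (`) \<phi> ` {S. is_MASS W S}" by (metis (mono_tags) image_eqI mem_Collect_eq)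
      qed
    qed
  qed
qed

lemma conj_prod:
  assumes "unitary_mat (V :: 'n::finite cmat)"
  shows "(adj V ** cscale a A ** V) ** (adj V ** cscale b B ** V) = adj V ** cscale (a * b) (A ** B) ** V"
  by (simp add: matrix_mul_assoc cscale_mult_left cscale_mult_right cscale_cscale unit_simps[OF assms] mult.commute)

lemma PCUE_fan:
  fixes W W' :: "'n::finite cmat set"
  assumes sep: "\<forall>A\<in>W. \<forall>B\<in>W. \<forall>a b. a \<noteq> 0 \<longrightarrow> b \<noteq> 0 \<longrightarrow> cscale a A = cscale b B \<longrightarrow> A = B"
    and pc: "PCUE W W'"
  shows "fan_PCUE (fan W) (fan W')"
proof -
  from pc obtain f V where f1: "\<forall>A\<in>W. cmod (f A) = 1" and V: "unitary_mat V"
    and eq: "W' = (\<lambda>A. adj V ** A ** V) ` (\<lambda>A. cscale (f A) A) ` W"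
    unfolding PCUE_def CUE_def CUE_via_def by blast
  define \<phi> where "\<phi> A = adj V ** cscale (f A) A ** V" for A
  have W': "W' = \<phi> ` W" unfolding eq \<phi>_def image_image ..
  have fnz: "f A \<noteq> 0" if "A \<in> W" for A using f1 that by fastforce
  have inj: "inj_on \<phi> W"
  proof (rule inj_onI)
    fix A B assume AB: "A \<in> W" "B \<in> W" "\<phi> A = \<phi> B"
    have "cscale (f A) A = cscale (f B) B" using conj_cancel[OF V] AB(3) unfolding \<phi>_def by blast
    thus "A = B" using sep AB(1,2) fnz[OF AB(1)] fnz[OF AB(2)] by simp
  qed
  have comm: "\<forall>A\<in>W. \<forall>B\<in>W. (\<phi> A ** \<phi> B = \<phi> B ** \<phi> A) \<longleftrightarrow> (A ** B = B ** A)"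
  proof (intro ballI)
    fix A B assume AB: "A \<in> W" "B \<in> W"
    have nz: "f A * f B \<noteq> 0" using fnz AB by simp
    have "(\<phi> A ** \<phi> B = \<phi> B ** \<phi> A) \<longleftrightarrow>
          adj V ** cscale (f A * f B) (A ** B) ** V = adj V ** cscale (f A * f B) (B ** A) ** V"
      unfolding \<phi>_def conj_prod[OF V] by (simp add: mult.commute)
    also have "\<dots> \<longleftrightarrow> cscale (f A * f B) (A ** B) = cscale (f A * f B) (B ** A)"
      by (rule iffI, erule conj_cancel[OF V], simp)
    also have "\<dots> \<longleftrightarrow> A ** B = B ** A"
      by (rule iffI, erule cscale_cancel[OF nz], simp)
    finally show "(\<phi> A ** \<phi> B = \<phi> B ** \<phi> A) \<longleftrightarrow> (A ** B = B ** A)" .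
  qed
  have bij: "bij_betw (\<lambda>S. \<phi> ` S) (fan W) (fan W')" by (rule MASS_transfer[OF inj W' comm])
  show ?thesis unfolding fan_PCUE_def
  proof (intro exI conjI)
    show "\<forall>A\<in>\<Union>(fan W). cmod (f A) = 1"
    proof
      fix A assume "A \<in> \<Union>(fan W)"
      then obtain S where "S \<in> fan W" "A \<in> S" by blast
      hence "A \<in> W" by (simp add: fan_def is_MASS_def subset_iff)
      thus "cmod (f A) = 1" using f1 by blast
    qed
    show "bij_betw (\<lambda>S. \<phi> ` S) (fan W) (fan W')" by fact
    show "\<forall>S\<in>fan W. CUE_via V ((\<lambda>A. cscale (f A) A) ` S) (\<phi> ` S)"
    proof
      fix S assume "S \<in> fan W"
      show "CUE_via V ((\<lambda>A. cscale (f A) A) ` S) (\<phi> ` S)"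
        unfolding CUE_via_def \<phi>_def image_image using V by simp
    qed
  qed
qed

lemma MASS_exists:
  fixes W :: "'n::finite cmat set"
  assumes fin: "finite W" and A: "A \<in> W"
  shows "\<exists>S. is_MASS W S \<and> A \<in> S"
proof -
  define C where "C = {T. T \<subseteq> W \<and> A \<in> T \<and> (\<forall>a\<in>T. \<forall>b\<in>T. a ** b = b ** a)}"
  have "{A} \<in> C" using A unfolding C_def by auto
  moreover have "finite C"
  proof (rule finite_subset)
    show "C \<subseteq> Pow W" unfolding C_def by blast
    show "finite (Pow W)" using fin by simp
  qed
  ultimately have fC: "finite (card ` C)" and neC: "card ` C \<noteq> {}" by auto
  have "Max (card ` C) \<in> card ` C" by (rule Max_in[OF fC neC])
  then obtain T where T: "T \<in> C" and cT: "card T = Max (card ` C)" by auto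
  have mx: "\<forall>T'\<in>C. card T' \<le> card T" unfolding cT using Max_ge[OF fC] by blast
  show ?thesis unfolding is_MASS_def
  proof (intro exI conjI allI impI)
    show "T \<subseteq> W" "A \<in> T" "\<forall>a\<in>T. \<forall>b\<in>T. a ** b = b ** a" using T unfolding C_def by auto
    fix T' assume T': "T \<subseteq> T' \<and> T' \<subseteq> W \<and> (\<forall>a\<in>T'. \<forall>b\<in>T'. a ** b = b ** a)"
    hence "T' \<in> C" using T unfolding C_def by auto
    hence "card T' \<le> card T" using mx by blast
    moreover have "finite T'" using T' fin by (meson rev_finite_subset)
    moreover have "card T \<le> card T'" using T' \<open>finite T'\<close> by (simp add: card_mono)
    ultimately have "card T = card T'" by simp
    thus "T' = T" using card_subset_eq[OF \<open>finite T'\<close>] T' by blast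
  qed
qed

lemma fan_union:
  fixes W :: "'n::finite cmat set"
  assumes "finite W" shows "\<Union>(fan W) = W"
proof
  show "\<Union>(fan W) \<subseteq> W" by (auto simp: fan_def is_MASS_def)
  show "W \<subseteq> \<Union>(fan W)"
  proof
    fix A assume "A \<in> W"
    then obtain S where "is_MASS W S" "A \<in> S" using MASS_exists[OF assms] by blast
    thus "A \<in> \<Union>(fan W)" unfolding fan_def by blast
  qed
qed

lemma fan_PCUE_imp:
  fixes W W' :: "'n::finite cmat set"
  assumes fW: "finite W" and fW': "finite W'" and ne: "W \<noteq> {}"
    and fp: "fan_PCUE (fan W) (fan W')"
  shows "PCUE W W'"
proof -
  from fp obtain V h \<beta> where h1: "\<forall>A\<in>\<Union>(fan W). cmod (h A) = 1" and bij: "bij_betw \<beta> (fan W) (fan W')"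
    and cue: "\<forall>S\<in>fan W. CUE_via V ((\<lambda>A. cscale (h A) A) ` S) (\<beta> S)"
    unfolding fan_PCUE_def by blast
  have uW: "\<Union>(fan W) = W" by (rule fan_union[OF fW])
  have uW': "\<Union>(fan W') = W'" by (rule fan_union[OF fW'])
  obtain A where "A \<in> W" using ne by blast
  hence "A \<in> \<Union>(fan W)" using uW by simp
  then obtain S0 where S0: "S0 \<in> fan W" by (rule UnionE)
  have "CUE_via V ((\<lambda>A. cscale (h A) A) ` S0) (\<beta> S0)" using cue S0 by (rule bspec)
  hence V: "unitary_mat V" by (simp add: CUE_via_def)
  define F where "F S = (\<lambda>A. adj V ** A ** V) ` (\<lambda>A. cscale (h A) A) ` S" for S
  have bF: "\<beta> S = F S" if "S \<in> fan W" for S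
    using cue that unfolding CUE_via_def F_def by simp
  have "W' = \<Union>(\<beta> ` fan W)" using bij uW' by (simp add: bij_betw_def)
  also have "\<beta> ` fan W = F ` fan W" by (rule image_cong[OF refl bF])
  also have "\<Union>(F ` fan W) = (\<lambda>A. adj V ** A ** V) ` (\<lambda>A. cscale (h A) A) ` \<Union>(fan W)"
    unfolding F_def image_Union image_image by simp
  finally have eq: "W' = (\<lambda>A. adj V ** A ** V) ` (\<lambda>A. cscale (h A) A) ` W" unfolding uW .
  have h1': "\<forall>A\<in>W. cmod (h A) = 1" using h1 uW by simp
  show ?thesis unfolding PCUE_def CUE_def CUE_via_def
    by (intro exI conjI, rule h1', rule V, rule eq)
qed

lemma invert_rel:
  assumes P: "unitary_mat (P :: 'n::finite cmat)" and Q: "unitary_mat Q" and a: "cmod a = 1"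
    and B: "B = P ** cscale a A ** Q"
  shows "A = adj P ** cscale (cnj a) B ** adj Q"
  unfolding B using cnj_mult_unit[OF a]
  by (simp add: matrix_mul_assoc cscale_mult_left cscale_mult_right cscale_cscale unit_simps[OF P] unit_simps[OF Q])

lemma tag_sep:
  fixes U :: "'x \<Rightarrow> 'n::finite cmat"
  assumes ub: "unitary_basis X U" and x0: "x0 \<in> X"
  shows "\<forall>A\<in>tag_system X U x0. \<forall>B\<in>tag_system X U x0. \<forall>a b. a \<noteq> 0 \<longrightarrow> b \<noteq> 0 \<longrightarrow> cscale a A = cscale b B \<longrightarrow> A = B"
  unfolding tag_eq_image using tag_phase_sep[OF ub x0] by blast

lemma tag_finite: "finite X \<Longrightarrow> finite (tag_system X U x0)"
  unfolding tag_eq_image by simp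

theorem theorem2p15:
  fixes X :: "'x set" and U U' :: "'x \<Rightarrow> complex ^ 'n::finite ^ 'n"
  assumes "CARD('n) \<ge> 2"
    and "finite X" and "card X = CARD('n) ^ 2"
    and "unitary_basis X U" and "unitary_basis X U'"
  shows "(phase_equivalent X U U' \<longleftrightarrow>
            (\<exists>x0\<in>X. \<exists>x0'\<in>X. PCUE (tag_system X U x0) (tag_system X U' x0')))
       \<and> ((\<exists>x0\<in>X. \<exists>x0'\<in>X. PCUE (tag_system X U x0) (tag_system X U' x0')) \<longleftrightarrow>
            (\<forall>x0\<in>X. \<exists>x0'\<in>X. PCUE (tag_system X U x0) (tag_system X U' x0')))
       \<and> ((\<forall>x0\<in>X. \<exists>x0'\<in>X. PCUE (tag_system X U x0) (tag_system X U' x0')) \<longleftrightarrow>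
            same_fan_systems_PCUE (fan_system X U) (fan_system X U'))"
proof -
  note ub = assms(4) and ub' = assms(5) and fin = assms(2)
  have cX: "card X \<ge> 4"
  proof -
    have "2 * 2 \<le> CARD('n) * CARD('n)" using assms(1) by (intro mult_mono) auto
    thus ?thesis using assms(3) by (simp add: power2_eq_square)
  qed
  have neX: "X \<noteq> {}" using cX by auto
  have neT: "tag_system X V x0 \<noteq> {}" if "x0 \<in> X" for V :: "'x \<Rightarrow> 'n cmat" and x0
  proof -
    have "X - {x0} \<noteq> {}"
    proof
      assume "X - {x0} = {}"
      hence "X \<subseteq> {x0}" by blast
      hence "card X \<le> 1" using card_mono[of "{x0}" X] by simp
      thus False using cX by simp
    qed
    thus ?thesis unfolding tag_eq_image by blast
  qed
  define P1 where "P1 = phase_equivalent X U U'"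
  define P2 where "P2 = (\<exists>x0\<in>X. \<exists>x0'\<in>X. PCUE (tag_system X U x0) (tag_system X U' x0'))"
  define P3 where "P3 = (\<forall>x0\<in>X. \<exists>x0'\<in>X. PCUE (tag_system X U x0) (tag_system X U' x0'))"
  define S3 where "S3 = (\<forall>x0'\<in>X. \<exists>x0\<in>X. PCUE (tag_system X U' x0') (tag_system X U x0))"
  have P1_both: "P3 \<and> S3" if p1: P1
  proof -
    from p1 obtain f V1 V2 \<sigma> where f1: "\<forall>x\<in>X. cmod (f x) = 1" and V1: "unitary_mat V1"
      and V2: "unitary_mat V2" and bs: "bij_betw \<sigma> X X"
      and eq: "\<forall>x\<in>X. U (\<sigma> x) = V1 ** cscale (f x) (U' x) ** V2"
      unfolding P1_def phase_equivalent_def ub_equivalent_def by blast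
    have a: "PCUE (tag_system X U' x0) (tag_system X U (\<sigma> x0))" if "x0 \<in> X" for x0
      by (rule tag_PCUE_transfer[OF ub' bs V1 V2 f1 eq that])
    define \<tau> where "\<tau> = inv_into X \<sigma>"
    have bt: "bij_betw \<tau> X X" unfolding \<tau>_def by (rule bij_betw_inv_into[OF bs])
    have st: "\<sigma> (\<tau> y) = y" if "y \<in> X" for y
      unfolding \<tau>_def using f_inv_into_f[of y \<sigma> X] bs that by (simp add: bij_betw_def)
    have tX: "\<tau> y \<in> X" if "y \<in> X" for y using bt that by (meson bij_betwE)
    have eq2: "\<forall>y\<in>X. U' (\<tau> y) = adj V1 ** cscale (cnj (f (\<tau> y))) (U y) ** adj V2"
    proof
      fix y assume y: "y \<in> X"
      show "U' (\<tau> y) = adj V1 ** cscale (cnj (f (\<tau> y))) (U y) ** adj V2"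
        by (rule invert_rel[OF V1 V2]) (use f1 tX[OF y] eq st[OF y] in auto)
    qed
    have g1: "\<forall>y\<in>X. cmod (cnj (f (\<tau> y))) = 1" using f1 tX by simp
    have b: "PCUE (tag_system X U y) (tag_system X U' (\<tau> y))" if "y \<in> X" for y
      by (rule tag_PCUE_transfer[OF ub bt unitary_adj[OF V1] unitary_adj[OF V2] g1 eq2 that])
    show ?thesis unfolding P3_def S3_def
    proof (intro conjI ballI)
      fix x0 assume "x0 \<in> X" thus "\<exists>x0'\<in>X. PCUE (tag_system X U x0) (tag_system X U' x0')"
        using b tX by blast
    next
      fix x0 assume "x0 \<in> X" thus "\<exists>x0'\<in>X. PCUE (tag_system X U' x0) (tag_system X U x0')"
        using a bs by (meson bij_betwE)
    qed
  qed
  have P2_P1: "P2 \<Longrightarrow> P1" unfolding P2_def P1_def using PCUE_tag_imp_phase[OF ub ub' fin] by blast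
  have P3_P2: "P3 \<Longrightarrow> P2" unfolding P3_def P2_def using neX by blast
  have P4_def': "same_fan_systems_PCUE (fan_system X U) (fan_system X U') \<longleftrightarrow>
      (\<forall>x0\<in>X. \<exists>x0'\<in>X. fan_PCUE (fan (tag_system X U x0)) (fan (tag_system X U' x0'))) \<and>
      (\<forall>x0'\<in>X. \<exists>x0\<in>X. fan_PCUE (fan (tag_system X U' x0')) (fan (tag_system X U x0)))"
    by (simp add: same_fan_systems_PCUE_def fan_system_def)
  have P3_P4: "same_fan_systems_PCUE (fan_system X U) (fan_system X U')" if p3: P3
  proof -
    have "P3 \<and> S3" using P1_both P2_P1 P3_P2 p3 by blast
    hence p3': P3 and s3: S3 by auto
    show ?thesis unfolding P4_def'
    proof (intro conjI ballI)
      fix x0 assume x0: "x0 \<in> X"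
      then obtain x0' where "x0' \<in> X" "PCUE (tag_system X U x0) (tag_system X U' x0')"
        using p3' unfolding P3_def by blast
      thus "\<exists>x0'\<in>X. fan_PCUE (fan (tag_system X U x0)) (fan (tag_system X U' x0'))"
        using PCUE_fan[OF tag_sep[OF ub x0]] by blast
    next
      fix x0 assume x0: "x0 \<in> X"
      then obtain x0' where "x0' \<in> X" "PCUE (tag_system X U' x0) (tag_system X U x0')"
        using s3 unfolding S3_def by blast
      thus "\<exists>x0'\<in>X. fan_PCUE (fan (tag_system X U' x0)) (fan (tag_system X U x0'))"
        using PCUE_fan[OF tag_sep[OF ub' x0]] by blast
    qed
  qed
  have P4_P3: "P3" if p4: "same_fan_systems_PCUE (fan_system X U) (fan_system X U')"
    unfolding P3_def
  proof
    fix x0 assume x0: "x0 \<in> X"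
    then obtain x0' where x0': "x0' \<in> X" and fp: "fan_PCUE (fan (tag_system X U x0)) (fan (tag_system X U' x0'))"
      using p4 unfolding P4_def' by blast
    have "PCUE (tag_system X U x0) (tag_system X U' x0')"
      by (rule fan_PCUE_imp[OF tag_finite[OF fin] tag_finite[OF fin] neT[OF x0] fp])
    thus "\<exists>x0'\<in>X. PCUE (tag_system X U x0) (tag_system X U' x0')" using x0' by blast
  qed
  have "P1 = P2" using P1_both P2_P1 P3_P2 by blast
  moreover have "P2 = P3" using P1_both P2_P1 P3_P2 by blast
  moreover have "P3 = same_fan_systems_PCUE (fan_system X U) (fan_system X U')" using P3_P4 P4_P3 by blast
  ultimately show ?thesis unfolding P1_def P2_def P3_def by blast
qed

end
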